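(* In the setting described in the context, assume $\sum_{j\in J}a_{ij}\hat{x}_j\ge b_i$ for all $i\in I$. For each $i\in I$ let $t_i$ be the optimal value and $(\Gamma^{(i)},\varphi^{(i)})$ an optimal solution of \[ \min_{\Gamma,\varphi}\ \sum_{j\in J}a_{ij}\hat{x}_j-\sum_{j\in J_i}\alpha_{ij}|\hat{x}_j|\varphi_{ij}-b_i \] subject to $\sum_{j\in J_i}\varphi_{ij}\le\Gamma_i$; $0\le\varphi_{ij}\le1$ for all $j\in J_i$; $\Gamma\in\Theta\cap\Omega$. Let $i^*\in\arg\min_{i\in I}t_i$ and $\Gamma^*=\Gamma^{(i^* )}$. Then the optimal value of RLO-CCU-DG is $t_{i^*}$, and an optimal solution has $\Gamma=\Gamma^*$, $c=\bar{a}_{i^*}(\Gamma^*_{i^*},\hat{x})$, $\pi=e_{i^*}$. Moreover, if for every $i\in I$ either $|a_{ij}|>\alpha_{ij}$ for some $j\in J_i$ or $a_{ij}\neq0$ for some $j\in J\setminus J_i$, then $c\neq0$ and $\bar{a}_i(\Gamma_i,x)\neq0$ for all $i\in I$ and all $x\in\mathbb{R}^n$.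
   Context: Let $I=\{1,\dots,m\}$, $J=\{1,\dots,n\}$. Given are $a_{ij}\in\mathbb{R}$, $b\in\mathbb{R}^m$, index sets $J_i\subseteq J$, nonnegative numbers $\alpha_{ij}$ ($j\in J_i,i\in I$), an observed point $\hat{x}\in\mathbb{R}^n$, and a convex set $\Omega\subseteq\mathbb{R}^m$. Let $\mathrm{sgn}(t)=1$ if $t\ge0$ and $-1$ otherwise; $e_i$ is the $i$-th unit vector of $\mathbb{R}^m$. For $i\in I$ and $x\in\mathbb{R}^n$ let $j^i_1(x),\dots,j^i_{|J_i|}(x)$ order $J_i$ so that $\alpha_{ij^i_k(x)}|x_{j^i_k(x)}|$ is the $k$-th largest element of $\{\alpha_{ij}|x_j|\}_{j\in J_i}$. For $\Gamma_i\in[0,|J_i|]$ let $P_i(\Gamma_i,x)=\sum_{k=1}^{\lfloor\Gamma_i\rfloor}\alpha_{ij^i_k(x)}|x_{j^i_k(x)}|+(\Gamma_i-\lfloor\Gamma_i\rfloor)\alpha_{ij^i_{\lceil\Gamma_i\rceil}(x)}|x_{j^i_{\lceil\Gamma_i\rceil}(x)}|$ (last term $0$ for integer $\Gamma_i$), and define $\bar{a}_i(\Gamma_i,x)\in\mathbb{R}^n$ by $\bar{a}_{ij}(\Gamma_i,x)=a_{ij}-\mathrm{sgn}(x_j)\alpha_{ij}$ if $j=j^i_k(x)$ for some $k\in\{1,\dots,\lfloor\Gamma_i\rfloor\}$; $\bar{a}_{ij}(\Gamma_i,x)=a_{ij}-\mathrm{sgn}(x_j)\alpha_{ij}(\Gamma_i-\lfloor\Gamma_i\rfloor)$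 if $j=j^i_{\lfloor\Gamma_i\rfloor+1}(x)$; and $\bar{a}_{ij}(\Gamma_i,x)=a_{ij}$ otherwise. Let $s_i=\sum_{j\in J}a_{ij}\hat{x}_j-b_i$, $\hat{I}=\{i\in I:0\le s_i\le\sum_{j\in J_i}\alpha_{ij}|\hat{x}_j|\}$, and for $i\in\hat{I}$ let $\underline{\Gamma}_i=\min\{\sum_{j\in J_i}w_j:\sum_{j\in J_i}\alpha_{ij}|\hat{x}_j|w_j=s_i,\ 0\le w_j\le1\}$, so $s_i=P_i(\underline{\Gamma}_i,\hat{x})$. Standing assumption: for each $i\in\hat{I}$, $\underline{\Gamma}_i$ is the unique $\Gamma_i\in[0,|J_i|]$ with $s_i=P_i(\Gamma_i,\hat{x})$. Let $\Theta=\{\Gamma\in\mathbb{R}^m:\Gamma_i\in[0,\underline{\Gamma}_i]\ \forall i\in\hat{I};\ \Gamma_i\in[0,|J_i|]\ \forall i\in I\setminus\hat{I}\}$. The problem RLO-CCU-DG is \[ \min_{\Gamma,c,u,y,z,\pi,\varphi,\lambda,\mu}\ \sum_{j\in J}c_j\hat{x}_j-\sum_{i\in I}b_i\pi_i \] subject to: $\Gamma\in\Omega$; $\alpha_{ij}\hat{x}_j+u_{ij}\ge0$ and $-\alpha_{ij}\hat{x}_j+u_{ij}\ge0$ ($j\in J_i,i\in I$); $y_{ij}+z_i\ge u_{ij}$ ($j\in J_i,i\in I$); $\sum_{j\in J}a_{ij}\hat{x}_j-\sum_{j\in J_i}y_{ij}-\Gamma_iz_i\ge b_i$ ($i\in I$);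 $y_{ij},z_i\ge0$; $0\le\Gamma_i\le|J_i|$ ($i\in I$); $\sum_{i\in I}\pi_i=1$; $\sum_{i\in I}a_{ij}\pi_i+\sum_{i\in I:j\in J_i}\alpha_{ij}(\lambda_{ij}-\mu_{ij})=c_j$ ($j\in J$); $\varphi_{ij}\le\pi_i$ and $\varphi_{ij}=\lambda_{ij}+\mu_{ij}$ ($j\in J_i,i\in I$); $\sum_{j\in J_i}\varphi_{ij}\le\Gamma_i\pi_i$ ($i\in I$); $\pi_i,\varphi_{ij},\lambda_{ij},\mu_{ij}\ge0$ ($j\in J_i,i\in I$). *)

theory Defs
  imports "HOL-Analysis.Analysis"
begin

text \<open>Index sets: I = UNIV :: 'm set, J = UNIV :: 'n set (finite types).
  a i j = a_ij, alpha i j = alpha_ij, Js i = J_i.\<close>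

definition sgnp :: "real \<Rightarrow> real" where
  "sgnp t = (if t \<ge> 0 then 1 else -1)"

text \<open>sg is an ordering j^i_1(x),...,j^i_{|J_i|}(x) of J_i (indexed from 1) such that
  alpha_{i sg k} |x_{sg k}| is the k-th largest element.\<close>
definition valid_order ::
  "('m \<Rightarrow> 'n \<Rightarrow> real) \<Rightarrow> ('m \<Rightarrow> 'n set) \<Rightarrow> 'm \<Rightarrow> real^'n \<Rightarrow> (nat \<Rightarrow> 'n) \<Rightarrow> bool" where
  "valid_order alpha Js i x sg \<longleftrightarrow>
     bij_betw sg {1..card (Js i)} (Js i) \<and>
     (\<forall>k\<in>{1..card (Js i)}. \<forall>l\<in>{1..card (Js i)}. k \<le> l \<longrightarrow>
        alpha i (sg l) * \<bar>x $ sg l\<bar> \<le> alpha i (sg k) * \<bar>x $ sg k\<bar>)"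

definition Pfun ::
  "('m \<Rightarrow> 'n \<Rightarrow> real) \<Rightarrow> ('m \<Rightarrow> real^'n \<Rightarrow> nat \<Rightarrow> 'n) \<Rightarrow> 'm \<Rightarrow> real \<Rightarrow> real^'n \<Rightarrow> real" where
  "Pfun alpha ord i G x =
     (\<Sum>k = 1..nat \<lfloor>G\<rfloor>. alpha i (ord i x k) * \<bar>x $ ord i x k\<bar>) +
     (if G = of_int \<lfloor>G\<rfloor> then 0
      else (G - of_int \<lfloor>G\<rfloor>) * (alpha i (ord i x (nat \<lceil>G\<rceil>)) * \<bar>x $ ord i x (nat \<lceil>G\<rceil>)\<bar>))"

definition abar ::
  "('m \<Rightarrow> 'n \<Rightarrow> real) \<Rightarrow> ('m \<Rightarrow> 'n \<Rightarrow> real) \<Rightarrow> ('m \<Rightarrow> 'n set) \<Rightarrow>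
   ('m \<Rightarrow> real^'n \<Rightarrow> nat \<Rightarrow> 'n) \<Rightarrow> 'm \<Rightarrow> real \<Rightarrow> real^'n \<Rightarrow> real^'n" where
  "abar a alpha Js ord i G x = (\<chi> j.
     if (\<exists>k\<in>{1..nat \<lfloor>G\<rfloor>}. j = ord i x k) then a i j - sgnp (x $ j) * alpha i j
     else if nat \<lfloor>G\<rfloor> + 1 \<le> card (Js i) \<and> j = ord i x (nat \<lfloor>G\<rfloor> + 1)
       then a i j - sgnp (x $ j) * alpha i j * (G - of_int \<lfloor>G\<rfloor>)
     else a i j)"

definition slack :: "('m \<Rightarrow> 'n \<Rightarrow> real) \<Rightarrow> real^'m \<Rightarrow> real^'n \<Rightarrow> 'm \<Rightarrow> real" where
  "slack a b xh i = (\<Sum>j\<in>UNIV. a i j * xh $ j) - b $ i"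

definition Ihat ::
  "('m \<Rightarrow> 'n \<Rightarrow> real) \<Rightarrow> ('m \<Rightarrow> 'n \<Rightarrow> real) \<Rightarrow> ('m \<Rightarrow> 'n set) \<Rightarrow> real^'m \<Rightarrow> real^'n \<Rightarrow> 'm set" where
  "Ihat a alpha Js b xh = {i. 0 \<le> slack a b xh i \<and>
      slack a b xh i \<le> (\<Sum>j\<in>Js i. alpha i j * \<bar>xh $ j\<bar>)}"

definition Gunder ::
  "('m \<Rightarrow> 'n \<Rightarrow> real) \<Rightarrow> ('m \<Rightarrow> 'n \<Rightarrow> real) \<Rightarrow> ('m \<Rightarrow> 'n set) \<Rightarrow> real^'m \<Rightarrow> real^'n \<Rightarrow> 'm \<Rightarrow> real" where
  "Gunder a alpha Js b xh i = Inf {(\<Sum>j\<in>Js i. w j) | w.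
      (\<Sum>j\<in>Js i. alpha i j * \<bar>xh $ j\<bar> * w j) = slack a b xh i \<and>
      (\<forall>j\<in>Js i. 0 \<le> w j \<and> w j \<le> 1)}"

definition Theta ::
  "('m \<Rightarrow> 'n \<Rightarrow> real) \<Rightarrow> ('m \<Rightarrow> 'n \<Rightarrow> real) \<Rightarrow> ('m \<Rightarrow> 'n set) \<Rightarrow> real^'m \<Rightarrow> real^'n \<Rightarrow> (real^'m) set" where
  "Theta a alpha Js b xh = {G.
      (\<forall>i\<in>Ihat a alpha Js b xh. 0 \<le> G $ i \<and> G $ i \<le> Gunder a alpha Js b xh i) \<and>
      (\<forall>i. i \<notin> Ihat a alpha Js b xh \<longrightarrow> 0 \<le> G $ i \<and> G $ i \<le> real (card (Js i)))}"

definition rlo_feasible ::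
  "('m \<Rightarrow> 'n \<Rightarrow> real) \<Rightarrow> ('m \<Rightarrow> 'n \<Rightarrow> real) \<Rightarrow> ('m \<Rightarrow> 'n set) \<Rightarrow> real^'m \<Rightarrow> real^'n \<Rightarrow> (real^'m) set \<Rightarrow>
   real^'m \<Rightarrow> real^'n \<Rightarrow> ('m \<Rightarrow> 'n \<Rightarrow> real) \<Rightarrow> ('m \<Rightarrow> 'n \<Rightarrow> real) \<Rightarrow> real^'m \<Rightarrow> real^'m \<Rightarrow>
   ('m \<Rightarrow> 'n \<Rightarrow> real) \<Rightarrow> ('m \<Rightarrow> 'n \<Rightarrow> real) \<Rightarrow> ('m \<Rightarrow> 'n \<Rightarrow> real) \<Rightarrow> bool" where
  "rlo_feasible a alpha Js b xh Omega G c u y z pv phi lam mu \<longleftrightarrow>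
     G \<in> Omega \<and>
     (\<forall>i. \<forall>j\<in>Js i. alpha i j * xh $ j + u i j \<ge> 0 \<and> - alpha i j * xh $ j + u i j \<ge> 0) \<and>
     (\<forall>i. \<forall>j\<in>Js i. y i j + z $ i \<ge> u i j) \<and>
     (\<forall>i. (\<Sum>j\<in>UNIV. a i j * xh $ j) - (\<Sum>j\<in>Js i. y i j) - G $ i * z $ i \<ge> b $ i) \<and>
     (\<forall>i. \<forall>j\<in>Js i. y i j \<ge> 0) \<and> (\<forall>i. z $ i \<ge> 0) \<and>
     (\<forall>i. 0 \<le> G $ i \<and> G $ i \<le> real (card (Js i))) \<and>
     (\<Sum>i\<in>UNIV. pv $ i) = 1 \<and>
     (\<forall>j. (\<Sum>i\<in>UNIV. a i j * pv $ i) + (\<Sum>i\<in>{i. j \<in> Js i}. alpha i j * (lam i j - mu i j)) = c $ j) \<and>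
     (\<forall>i. \<forall>j\<in>Js i. phi i j \<le> pv $ i \<and> phi i j = lam i j + mu i j) \<and>
     (\<forall>i. (\<Sum>j\<in>Js i. phi i j) \<le> G $ i * pv $ i) \<and>
     (\<forall>i. pv $ i \<ge> 0) \<and>
     (\<forall>i. \<forall>j\<in>Js i. phi i j \<ge> 0 \<and> lam i j \<ge> 0 \<and> mu i j \<ge> 0)"

definition rlo_obj :: "real^'m \<Rightarrow> real^'n \<Rightarrow> real^'n \<Rightarrow> real^'m \<Rightarrow> real" where
  "rlo_obj b xh c pv = (\<Sum>j\<in>UNIV. c $ j * xh $ j) - (\<Sum>i\<in>UNIV. b $ i * pv $ i)"

definition sub_feasible ::
  "('m \<Rightarrow> 'n \<Rightarrow> real) \<Rightarrow> ('m \<Rightarrow> 'n \<Rightarrow> real) \<Rightarrow> ('m \<Rightarrow> 'n set) \<Rightarrow> real^'m \<Rightarrow> real^'n \<Rightarrow> (real^'m) set \<Rightarrow>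
   'm \<Rightarrow> real^'m \<Rightarrow> ('m \<Rightarrow> 'n \<Rightarrow> real) \<Rightarrow> bool" where
  "sub_feasible a alpha Js b xh Omega i G phi \<longleftrightarrow>
     (\<Sum>j\<in>Js i. phi i j) \<le> G $ i \<and>
     (\<forall>j\<in>Js i. 0 \<le> phi i j \<and> phi i j \<le> 1) \<and>
     G \<in> Theta a alpha Js b xh \<inter> Omega"

definition sub_obj ::
  "('m \<Rightarrow> 'n \<Rightarrow> real) \<Rightarrow> ('m \<Rightarrow> 'n \<Rightarrow> real) \<Rightarrow> ('m \<Rightarrow> 'n set) \<Rightarrow> real^'m \<Rightarrow> real^'n \<Rightarrow>
   'm \<Rightarrow> ('m \<Rightarrow> 'n \<Rightarrow> real) \<Rightarrow> real" where
  "sub_obj a alpha Js b xh i phi =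
     (\<Sum>j\<in>UNIV. a i j * xh $ j) - (\<Sum>j\<in>Js i. alpha i j * \<bar>xh $ j\<bar> * phi i j) - b $ i"

end

theory Submission imports Defs begin

definition WW :: "(nat \<Rightarrow> 'n) \<Rightarrow> nat \<Rightarrow> real \<Rightarrow> 'n \<Rightarrow> real" where
 "WW sg N G j = (if \<exists>k\<in>{1..nat \<lfloor>G\<rfloor>}. j = sg k then 1
    else if nat \<lfloor>G\<rfloor> + 1 \<le> N \<and> j = sg (nat \<lfloor>G\<rfloor> + 1) then G - of_int \<lfloor>G\<rfloor> else 0)"

definition PP :: "('n \<Rightarrow> real) \<Rightarrow> (nat \<Rightarrow> 'n) \<Rightarrow> real \<Rightarrow> real" where
 "PP v sg G = (\<Sum>k = 1..nat \<lfloor>G\<rfloor>. v (sg k)) +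
    (if G = of_int \<lfloor>G\<rfloor> then 0 else (G - of_int \<lfloor>G\<rfloor>) * v (sg (nat \<lceil>G\<rceil>)))"

definition TH :: "('n \<Rightarrow> real) \<Rightarrow> (nat \<Rightarrow> 'n) \<Rightarrow> nat \<Rightarrow> real \<Rightarrow> real" where
 "TH v sg N G = (if nat \<lfloor>G\<rfloor> + 1 \<le> N then v (sg (nat \<lfloor>G\<rfloor> + 1)) else 0)"

lemma floor_facts:
  fixes G :: real
  assumes "0 \<le> G" "G \<le> real N"
  shows "nat \<lfloor>G\<rfloor> \<le> N" "real (nat \<lfloor>G\<rfloor>) = of_int \<lfloor>G\<rfloor>"
    "0 \<le> G - of_int \<lfloor>G\<rfloor>" "G - of_int \<lfloor>G\<rfloor> < 1"
    "G \<noteq> of_int \<lfloor>G\<rfloor> \<Longrightarrow> nat \<lceil>G\<rceil> = nat \<lfloor>G\<rfloor> + 1"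
    "G \<noteq> of_int \<lfloor>G\<rfloor> \<Longrightarrow> nat \<lfloor>G\<rfloor> + 1 \<le> N"
    "\<not> nat \<lfloor>G\<rfloor> + 1 \<le> N \<Longrightarrow> G = real N \<and> nat \<lfloor>G\<rfloor> = N"
proof -
  show 1: "nat \<lfloor>G\<rfloor> \<le> N" using assms
    by (metis floor_mono floor_of_nat nat_int nat_mono)
  show 2: "real (nat \<lfloor>G\<rfloor>) = of_int \<lfloor>G\<rfloor>" using assms by simp
  show "0 \<le> G - of_int \<lfloor>G\<rfloor>" by simp
  show "G - of_int \<lfloor>G\<rfloor> < 1" by linarith
  show "G \<noteq> of_int \<lfloor>G\<rfloor> \<Longrightarrow> nat \<lceil>G\<rceil> = nat \<lfloor>G\<rfloor> + 1"
    using assms by (metis add.commute ceiling_altdef floor_le_zero nat_add_distrib nat_one_as_int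
        of_int_floor_le zero_le_floor zero_less_one_class.zero_le_one)
  show "G \<noteq> of_int \<lfloor>G\<rfloor> \<Longrightarrow> nat \<lfloor>G\<rfloor> + 1 \<le> N"
  proof -
    assume "G \<noteq> of_int \<lfloor>G\<rfloor>"
    hence "of_int \<lfloor>G\<rfloor> < G" using of_int_floor_le[of G] by linarith
    hence "real (nat \<lfloor>G\<rfloor>) < real N" using 2 assms by linarith
    thus ?thesis by simp
  qed
  show "\<not> nat \<lfloor>G\<rfloor> + 1 \<le> N \<Longrightarrow> G = real N \<and> nat \<lfloor>G\<rfloor> = N"
  proof -
    assume "\<not> nat \<lfloor>G\<rfloor> + 1 \<le> N"
    hence "nat \<lfloor>G\<rfloor> = N" using 1 by simp
    hence "of_int \<lfloor>G\<rfloor> = real N" using 2 by simp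
    thus ?thesis using assms \<open>nat \<lfloor>G\<rfloor> = N\<close> by linarith
  qed
qed

lemma sum_cut:
  fixes g :: "nat \<Rightarrow> real"
  assumes "n \<le> N"
  shows "(\<Sum>k=1..N. (if k \<le> n then g k else if k = n+1 then f * g k else 0)) =
     (\<Sum>k=1..n. g k) + (if n+1 \<le> N then f * g (n+1) else 0)"
proof -
  have "(\<Sum>k=1..N. (if k \<le> n then g k else if k = n+1 then f * g k else 0)) =
     (\<Sum>k=1..N. (if k \<le> n then g k else 0)) + (\<Sum>k=1..N. (if k = n+1 then f * g k else 0))"
    by (subst sum.distrib[symmetric]) (rule sum.cong, auto)
  also have "(\<Sum>k=1..N. (if k \<le> n then g k else 0)) = (\<Sum>k\<in>{1..N} \<inter> {k. k \<le> n}. g k)"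
    by (simp add: sum.inter_restrict)
  also have "{1..N} \<inter> {k. k \<le> n} = {1..n}" using assms by auto
  also have "(\<Sum>k=1..N. (if k = n+1 then f * g k else 0)) = (if n+1 \<le> N then f * g (n+1) else 0)"
    by (subst sum.delta) auto
  finally show ?thesis .
qed

context
  fixes sg :: "nat \<Rightarrow> 'n" and N :: nat and S :: "'n set" and G :: real
  assumes bij: "bij_betw sg {1..N} S" and G0: "0 \<le> G" and GN: "G \<le> real N"
begin

lemma WW_sg: "k \<in> {1..N} \<Longrightarrow> WW sg N G (sg k) =
   (if k \<le> nat \<lfloor>G\<rfloor> then 1 else if k = nat \<lfloor>G\<rfloor> + 1 then G - of_int \<lfloor>G\<rfloor> else 0)"
proof -
  assume k: "k \<in> {1..N}"
  have inj: "inj_on sg {1..N}" using bij bij_betw_def by blast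
  have nN: "nat \<lfloor>G\<rfloor> \<le> N" using floor_facts[OF G0 GN] by simp
  have e1: "(\<exists>k'\<in>{1..nat \<lfloor>G\<rfloor>}. sg k = sg k') \<longleftrightarrow> k \<le> nat \<lfloor>G\<rfloor>"
  proof
    assume "\<exists>k'\<in>{1..nat \<lfloor>G\<rfloor>}. sg k = sg k'"
    then obtain k' where "k' \<in> {1..nat \<lfloor>G\<rfloor>}" "sg k = sg k'" by blast
    with inj k nN have "k = k'" by (auto dest: inj_onD)
    thus "k \<le> nat \<lfloor>G\<rfloor>" using \<open>k' \<in> _\<close> by simp
  next
    assume "k \<le> nat \<lfloor>G\<rfloor>" thus "\<exists>k'\<in>{1..nat \<lfloor>G\<rfloor>}. sg k = sg k'" using k by auto
  qed
  have e2: "nat \<lfloor>G\<rfloor> + 1 \<le> N \<Longrightarrow> sg k = sg (nat \<lfloor>G\<rfloor> + 1) \<longleftrightarrow> k = nat \<lfloor>G\<rfloor> + 1"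
    using inj k by (auto dest: inj_onD)
  show ?thesis unfolding WW_def using e1 e2 k by auto
qed

lemma WW_out: "j \<notin> S \<Longrightarrow> WW sg N G j = 0"
proof -
  assume j: "j \<notin> S"
  have nN: "nat \<lfloor>G\<rfloor> \<le> N" using floor_facts[OF G0 GN] by simp
  have "\<forall>k\<in>{1..N}. sg k \<in> S" using bij bij_betwE by blast
  thus ?thesis unfolding WW_def using j nN by (auto)
qed

lemma WW_range: "0 \<le> WW sg N G j \<and> WW sg N G j \<le> 1"
  unfolding WW_def using floor_facts[OF G0 GN] by auto

lemma sum_reidx: "sum f S = (\<Sum>k=1..N. f (sg k))"
  using sum.reindex_bij_betw[OF bij, of f] by simp

lemma sum_vWW: "(\<Sum>j\<in>S. v j * WW sg N G j) = PP v sg G"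
proof -
  have "(\<Sum>j\<in>S. v j * WW sg N G j) = (\<Sum>k=1..N. v (sg k) * WW sg N G (sg k))"
    by (rule sum_reidx)
  also have "\<dots> = (\<Sum>k=1..N. (if k \<le> nat \<lfloor>G\<rfloor> then v (sg k) else if k = nat \<lfloor>G\<rfloor> + 1
       then (G - of_int \<lfloor>G\<rfloor>) * v (sg k) else 0))"
    by (rule sum.cong) (auto simp: WW_sg)
  also have "\<dots> = (\<Sum>k=1..nat \<lfloor>G\<rfloor>. v (sg k)) + (if nat \<lfloor>G\<rfloor> + 1 \<le> N then
       (G - of_int \<lfloor>G\<rfloor>) * v (sg (nat \<lfloor>G\<rfloor> + 1)) else 0)"
    using sum_cut[OF floor_facts(1)[OF G0 GN]] by simp
  also have "\<dots> = PP v sg G"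
    unfolding PP_def using floor_facts[OF G0 GN] by auto
  finally show ?thesis .
qed

lemma sum_WW: "(\<Sum>j\<in>S. WW sg N G j) = G"
proof -
  have "(\<Sum>j\<in>S. WW sg N G j) = PP (\<lambda>_. 1) sg G" using sum_vWW[of "\<lambda>_. 1"] by simp
  also have "\<dots> = G" unfolding PP_def using floor_facts[OF G0 GN] by auto
  finally show ?thesis .
qed

context
  fixes v :: "'n \<Rightarrow> real"
  assumes vnn: "\<And>j. j \<in> S \<Longrightarrow> 0 \<le> v j"
    and vord: "\<And>k l. k \<in> {1..N} \<Longrightarrow> l \<in> {1..N} \<Longrightarrow> k \<le> l \<Longrightarrow> v (sg l) \<le> v (sg k)"
begin

lemma TH_nn: "0 \<le> TH v sg N G"
  unfolding TH_def using vnn bij bij_betwE by fastforce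

lemma PP_dual: "(\<Sum>j\<in>S. max (v j - TH v sg N G) 0) + TH v sg N G * G = PP v sg G"
proof (cases "nat \<lfloor>G\<rfloor> + 1 \<le> N")
  case True
  let ?n = "nat \<lfloor>G\<rfloor>" let ?th = "v (sg (?n+1))"
  have th: "TH v sg N G = ?th" using True by (simp add: TH_def)
  have "(\<Sum>j\<in>S. max (v j - ?th) 0) = (\<Sum>k=1..N. max (v (sg k) - ?th) 0)"
    by (rule sum_reidx)
  also have "\<dots> = (\<Sum>k=1..N. (if k \<le> ?n then v (sg k) - ?th else if k = ?n+1 then 0 * (v (sg k) - ?th) else 0))"
  proof (rule sum.cong)
    fix k assume k: "k \<in> {1..N}"
    show "max (v (sg k) - ?th) 0 = (if k \<le> ?n then v (sg k) - ?th else if k = ?n+1 then 0 * (v (sg k) - ?th) else 0)"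
    proof (cases "k \<le> ?n + 1")
      case True
      have "?th \<le> v (sg k)" using vord[of k "?n+1"] k True \<open>?n + 1 \<le> N\<close> by auto
      then show ?thesis using True by (cases "k = ?n+1") auto
    next
      case False
      have "v (sg k) \<le> ?th" using vord[of "?n+1" k] k False \<open>?n + 1 \<le> N\<close> by auto
      then show ?thesis using False by auto
    qed
  qed simp
  also have "\<dots> = (\<Sum>k=1..?n. v (sg k) - ?th)"
    using sum_cut[OF floor_facts(1)[OF G0 GN], of "\<lambda>k. v (sg k) - ?th" 0] by simp
  also have "\<dots> = (\<Sum>k=1..?n. v (sg k)) - real ?n * ?th"
    by (simp add: sum_subtractf)
  finally have "(\<Sum>j\<in>S. max (v j - TH v sg N G) 0) + TH v sg N G * G =
     (\<Sum>k=1..?n. v (sg k)) + (G - real ?n) * ?th" using th by (simp add: algebra_simps)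
  also have "\<dots> = PP v sg G"
    unfolding PP_def using floor_facts[OF G0 GN] by auto
  finally show ?thesis .
next
  case False
  have f: "G = real N" "nat \<lfloor>G\<rfloor> = N" using floor_facts(7)[OF G0 GN False] by auto
  have th: "TH v sg N G = 0" using False by (simp add: TH_def)
  have "(\<Sum>j\<in>S. max (v j - 0) 0) = (\<Sum>j\<in>S. v j)" using vnn by (intro sum.cong) auto
  also have "\<dots> = (\<Sum>k=1..N. v (sg k))" by (rule sum_reidx)
  also have "\<dots> = PP v sg G" unfolding PP_def using f by simp
  finally show ?thesis using th by simp
qed

lemma PP_upper:
  assumes ph: "\<And>j. j \<in> S \<Longrightarrow> 0 \<le> phi j \<and> phi j \<le> 1" and sph: "(\<Sum>j\<in>S. phi j) \<le> G"
  shows "(\<Sum>j\<in>S. v j * phi j) \<le> PP v sg G"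
proof -
  let ?th = "TH v sg N G"
  have "(\<Sum>j\<in>S. v j * phi j) \<le> (\<Sum>j\<in>S. max (v j - ?th) 0 + ?th * phi j)"
  proof (rule sum_mono)
    fix j assume j: "j \<in> S"
    have "v j * phi j = (v j - ?th) * phi j + ?th * phi j" by (simp add: algebra_simps)
    also have "(v j - ?th) * phi j \<le> max (v j - ?th) 0"
      using ph[OF j] by (cases "v j - ?th \<ge> 0") (auto simp: mult_left_le mult_nonpos_nonneg)
    finally show "v j * phi j \<le> max (v j - ?th) 0 + ?th * phi j" by simp
  qed
  also have "\<dots> = (\<Sum>j\<in>S. max (v j - ?th) 0) + ?th * (\<Sum>j\<in>S. phi j)"
    by (simp add: sum.distrib sum_distrib_left)
  also have "\<dots> \<le> (\<Sum>j\<in>S. max (v j - ?th) 0) + ?th * G"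
    using sph TH_nn by (simp add: mult_left_mono)
  also have "\<dots> = PP v sg G" by (rule PP_dual)
  finally show ?thesis .
qed

end
end

lemma PP_mono:
  assumes bij: "bij_betw sg {1..N} S" and vnn: "\<And>j. j \<in> S \<Longrightarrow> 0 \<le> v j"
    and vord: "\<And>k l. k \<in> {1..N} \<Longrightarrow> l \<in> {1..N} \<Longrightarrow> k \<le> l \<Longrightarrow> v (sg l) \<le> v (sg k)"
    and "0 \<le> G1" "G1 \<le> G2" "G2 \<le> real N"
  shows "PP v sg G1 \<le> PP v sg G2"
proof -
  have g1: "G1 \<le> real N" using assms by linarith
  have "PP v sg G1 = (\<Sum>j\<in>S. v j * WW sg N G1 j)" using sum_vWW[OF bij assms(4) g1] by simp
  also have "\<dots> \<le> PP v sg G2"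
    apply (rule PP_upper[OF bij, where v=v])
    using assms WW_range[OF bij assms(4) g1] sum_WW[OF bij assms(4) g1] by auto
  finally show ?thesis .
qed


lemma Pfun_PP: "Pfun alpha ord i G x = PP (\<lambda>j. alpha i j * \<bar>x $ j\<bar>) (ord i x) G"
  by (simp add: Pfun_def PP_def)

lemma abar_WW: "abar a alpha Js ord i G x $ j =
   a i j - sgnp (x $ j) * alpha i j * WW (ord i x) (card (Js i)) G j"
  by (simp add: abar_def WW_def)

lemma sgnp_abs: "sgnp t * t = \<bar>t\<bar>" "\<bar>sgnp t\<bar> = 1"
  by (auto simp: sgnp_def)

theorem theorem5:
  fixes a alpha :: "'m::finite \<Rightarrow> 'n::finite \<Rightarrow> real"
    and Js :: "'m \<Rightarrow> 'n set"
    and b :: "real^'m" and xh :: "real^'n"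
    and Omega :: "(real^'m) set"
    and ord :: "'m \<Rightarrow> real^'n \<Rightarrow> nat \<Rightarrow> 'n"
    and t :: "'m \<Rightarrow> real"
    and Gs :: "'m \<Rightarrow> real^'m"
    and phis :: "'m \<Rightarrow> 'm \<Rightarrow> 'n \<Rightarrow> real"
    and istar :: 'm
  assumes alpha_nonneg: "\<And>i j. j \<in> Js i \<Longrightarrow> alpha i j \<ge> 0"
    and Omega_convex: "convex Omega"
    and ord_valid: "\<And>i x. valid_order alpha Js i x (ord i x)"
    and unique_Gunder: "\<And>i. i \<in> Ihat a alpha Js b xh \<Longrightarrow>
          (\<forall>G\<in>{0..real (card (Js i))}. slack a b xh i = Pfun alpha ord i G xh
              \<longleftrightarrow> G = Gunder a alpha Js b xh i)"
    and xh_feasible: "\<And>i. (\<Sum>j\<in>UNIV. a i j * xh $ j) \<ge> b $ i"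
    and sub_opt_feas: "\<And>i. sub_feasible a alpha Js b xh Omega i (Gs i) (phis i)"
    and sub_opt_val: "\<And>i. t i = sub_obj a alpha Js b xh i (phis i)"
    and sub_opt_min: "\<And>i G phi. sub_feasible a alpha Js b xh Omega i G phi \<Longrightarrow>
          t i \<le> sub_obj a alpha Js b xh i phi"
    and istar_argmin: "\<And>i. t istar \<le> t i"
  shows "(\<forall>G c u y z pv phi lam mu.
            rlo_feasible a alpha Js b xh Omega G c u y z pv phi lam mu \<longrightarrow>
            t istar \<le> rlo_obj b xh c pv)
       \<and> (\<exists>u y z phi lam mu.
            rlo_feasible a alpha Js b xh Omega (Gs istar)
              (abar a alpha Js ord istar (Gs istar $ istar) xh) u y z (axis istar 1) phi lam mu
          \<and> rlo_obj b xh (abar a alpha Js ord istar (Gs istar $ istar) xh) (axis istar 1) = t istar)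
       \<and> ((\<forall>i. (\<exists>j\<in>Js i. \<bar>a i j\<bar> > alpha i j) \<or> (\<exists>j. j \<notin> Js i \<and> a i j \<noteq> 0)) \<longrightarrow>
            abar a alpha Js ord istar (Gs istar $ istar) xh \<noteq> 0 \<and>
            (\<forall>i G x. 0 \<le> G \<and> G \<le> real (card (Js i)) \<longrightarrow> abar a alpha Js ord i G x \<noteq> 0))"
proof -
  define V where "V i j = alpha i j * \<bar>xh $ j\<bar>" for i j
  define s where "s i = slack a b xh i" for i
  define Gu where "Gu i = Gunder a alpha Js b xh i" for i
  define IH where "IH = Ihat a alpha Js b xh"
  define TT where "TT = Theta a alpha Js b xh"
  have bij: "\<And>i x. bij_betw (ord i x) {1..card (Js i)} (Js i)"
    using ord_valid unfolding valid_order_def by blast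
  have vord: "\<And>i x k l. k \<in> {1..card (Js i)} \<Longrightarrow> l \<in> {1..card (Js i)} \<Longrightarrow> k \<le> l \<Longrightarrow>
     (\<lambda>j. alpha i j * \<bar>x $ j\<bar>) (ord i x l) \<le> (\<lambda>j. alpha i j * \<bar>x $ j\<bar>) (ord i x k)"
    using ord_valid unfolding valid_order_def by blast
  have vnn: "\<And>i x j. j \<in> Js i \<Longrightarrow> 0 \<le> (\<lambda>j. alpha i j * \<bar>x $ j\<bar>) j"
    using alpha_nonneg by simp
  have PV: "\<And>i G. Pfun alpha ord i G xh = PP (V i) (ord i xh) G"
    unfolding V_def by (rule Pfun_PP)
  have s_nn: "\<And>i. 0 \<le> s i" using xh_feasible unfolding s_def slack_def by (simp add: algebra_simps)
  have Gu_facts: "\<And>i. i \<in> IH \<Longrightarrow> 0 \<le> Gu i \<and> Gu i \<le> real (card (Js i)) \<and> PP (V i) (ord i xh) (Gu i) = s i"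
  proof -
    fix i assume iI: "i \<in> IH"
    let ?T = "\<Sum>j\<in>Js i. V i j"
    have sT: "0 \<le> s i" "s i \<le> ?T" using iI unfolding IH_def Ihat_def s_def V_def by auto
    define X where "X = {(\<Sum>j\<in>Js i. w j) | w.
      (\<Sum>j\<in>Js i. alpha i j * \<bar>xh $ j\<bar> * w j) = slack a b xh i \<and>
      (\<forall>j\<in>Js i. 0 \<le> w j \<and> w j \<le> 1)}"
    have GuX: "Gu i = Inf X" unfolding Gu_def Gunder_def X_def by simp
    define w where "w j = (if ?T = 0 then 0 else s i / ?T)" for j :: 'n
    have w1: "(\<Sum>j\<in>Js i. alpha i j * \<bar>xh $ j\<bar> * w j) = slack a b xh i"
    proof (cases "?T = 0")
      case True thus ?thesis using sT unfolding w_def s_def by simp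
    next
      case False
      have "(\<Sum>j\<in>Js i. alpha i j * \<bar>xh $ j\<bar> * w j) = ?T * (s i / ?T)"
        unfolding w_def V_def using False by (simp add: sum_distrib_right sum_divide_distrib)
      thus ?thesis using False unfolding s_def by simp
    qed
    have w2: "\<forall>j\<in>Js i. 0 \<le> w j \<and> w j \<le> 1" unfolding w_def using sT by auto
    have ne: "(\<Sum>j\<in>Js i. w j) \<in> X" unfolding X_def using w1 w2 by blast
    have bnd: "\<And>x. x \<in> X \<Longrightarrow> 0 \<le> x \<and> x \<le> real (card (Js i))"
    proof -
      fix x assume "x \<in> X"
      then obtain w' where x: "x = (\<Sum>j\<in>Js i. w' j)" and w': "\<forall>j\<in>Js i. 0 \<le> w' j \<and> w' j \<le> 1"
        unfolding X_def by blast
      have "0 \<le> x" unfolding x using w' by (simp add: sum_nonneg)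
      moreover have "x \<le> real (card (Js i))" unfolding x using w'
        using sum_bounded_above[of "Js i" w' 1] by simp
      ultimately show "0 \<le> x \<and> x \<le> real (card (Js i))" by simp
    qed
    have g0: "0 \<le> Gu i" unfolding GuX using ne bnd by (intro cInf_greatest) auto
    have bb: "bdd_below X" using bnd by (intro bdd_belowI[of _ 0]) auto
    have g1: "Gu i \<le> real (card (Js i))" unfolding GuX
      using cInf_lower[OF ne bb] bnd[OF ne] by linarith
    have "slack a b xh i = Pfun alpha ord i (Gu i) xh"
      using unique_Gunder[of i] iI g0 g1 unfolding IH_def Gu_def by auto
    thus "0 \<le> Gu i \<and> Gu i \<le> real (card (Js i)) \<and> PP (V i) (ord i xh) (Gu i) = s i"
      using g0 g1 PV unfolding s_def by simp
  qed
  have sumVW: "\<And>i G. 0 \<le> G \<Longrightarrow> G \<le> real (card (Js i)) \<Longrightarrow>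
     (\<Sum>j\<in>Js i. V i j * WW (ord i xh) (card (Js i)) G j) = PP (V i) (ord i xh) G"
    by (rule sum_vWW[OF bij])
  have Pmono: "\<And>i G1 G2. 0 \<le> G1 \<Longrightarrow> G1 \<le> G2 \<Longrightarrow> G2 \<le> real (card (Js i)) \<Longrightarrow>
     PP (V i) (ord i xh) G1 \<le> PP (V i) (ord i xh) G2"
  proof -
    fix i G1 G2 assume h: "0 \<le> G1" "G1 \<le> G2" "G2 \<le> real (card (Js i))"
    show "PP (V i) (ord i xh) G1 \<le> PP (V i) (ord i xh) G2"
      unfolding V_def by (rule PP_mono[where v="\<lambda>j. alpha i j * \<bar>xh $ j\<bar>", OF bij[of i xh] vnn[of _ i xh] vord[of _ i _ xh] h])
  qed
  have Pupper: "\<And>i G phi. 0 \<le> G \<Longrightarrow> G \<le> real (card (Js i)) \<Longrightarrow>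
     (\<And>j. j \<in> Js i \<Longrightarrow> 0 \<le> phi j \<and> phi j \<le> 1) \<Longrightarrow> (\<Sum>j\<in>Js i. phi j) \<le> G \<Longrightarrow>
     (\<Sum>j\<in>Js i. V i j * phi j) \<le> PP (V i) (ord i xh) G"
  proof -
    fix i G phi assume h: "0 \<le> G" "G \<le> real (card (Js i))"
      "\<And>j. j \<in> Js i \<Longrightarrow> 0 \<le> phi j \<and> phi j \<le> 1" "(\<Sum>j\<in>Js i. phi j) \<le> G"
    show "(\<Sum>j\<in>Js i. V i j * phi j) \<le> PP (V i) (ord i xh) G"
      unfolding V_def by (rule PP_upper[where v="\<lambda>j. alpha i j * \<bar>xh $ j\<bar>", OF bij[of i xh] h(1,2) vnn[of _ i xh] vord[of _ i _ xh] h(3,4)])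
  qed
  have Theta_range: "\<And>G i. G \<in> TT \<Longrightarrow> 0 \<le> G $ i \<and> G $ i \<le> real (card (Js i))"
    using Gu_facts unfolding TT_def Theta_def IH_def Gu_def by force
  have Theta_P: "\<And>G i. G \<in> TT \<Longrightarrow> PP (V i) (ord i xh) (G $ i) \<le> s i"
  proof -
    fix G i assume G: "G \<in> TT"
    show "PP (V i) (ord i xh) (G $ i) \<le> s i"
    proof (cases "i \<in> IH")
      case True
      have "G $ i \<le> Gu i" using G True unfolding TT_def Theta_def IH_def Gu_def by auto
      hence "PP (V i) (ord i xh) (G $ i) \<le> PP (V i) (ord i xh) (Gu i)"
        using Pmono Theta_range[OF G] Gu_facts[OF True] by blast
      thus ?thesis using Gu_facts[OF True] by simp
    next
      case False
      hence "s i > (\<Sum>j\<in>Js i. V i j)" using s_nn[of i]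
        unfolding IH_def Ihat_def s_def V_def by auto
      moreover have "PP (V i) (ord i xh) (G $ i) \<le> (\<Sum>j\<in>Js i. V i j)"
      proof -
        have "PP (V i) (ord i xh) (G $ i) = (\<Sum>j\<in>Js i. V i j * WW (ord i xh) (card (Js i)) (G $ i) j)"
          using sumVW Theta_range[OF G] by simp
        also have "\<dots> \<le> (\<Sum>j\<in>Js i. V i j)"
          using WW_range[OF bij[of i xh], of "G $ i"] Theta_range[OF G] vnn
          by (intro sum_mono) (simp add: V_def mult_left_le)
        finally show ?thesis .
      qed
      ultimately show ?thesis by simp
    qed
  qed
  have to_Theta: "\<And>G. (\<And>i. 0 \<le> G $ i \<and> G $ i \<le> real (card (Js i))) \<Longrightarrow>
      (\<And>i. PP (V i) (ord i xh) (G $ i) \<le> s i) \<Longrightarrow> G \<in> TT"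
  proof -
    fix G :: "real^'m"
    assume r: "\<And>i. 0 \<le> G $ i \<and> G $ i \<le> real (card (Js i))"
      and p: "\<And>i. PP (V i) (ord i xh) (G $ i) \<le> s i"
    have "\<And>i. i \<in> IH \<Longrightarrow> G $ i \<le> Gu i"
    proof (rule ccontr)
      fix i assume iI: "i \<in> IH" and "\<not> G $ i \<le> Gu i"
      hence lt: "Gu i < G $ i" by simp
      have "s i \<le> PP (V i) (ord i xh) (G $ i)"
        using Pmono[of "Gu i" "G $ i" i] lt r[of i] Gu_facts[OF iI] by simp
      hence "slack a b xh i = Pfun alpha ord i (G $ i) xh" using p[of i] PV unfolding s_def by simp
      hence "G $ i = Gu i" using unique_Gunder[of i] iI r[of i] unfolding IH_def Gu_def by auto
      thus False using lt by simp
    qed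
    thus "G \<in> TT" using r unfolding TT_def Theta_def IH_def Gu_def by auto
  qed
  have part1: "\<forall>G c u y z pv phi lam mu.
            rlo_feasible a alpha Js b xh Omega G c u y z pv phi lam mu \<longrightarrow>
            t istar \<le> rlo_obj b xh c pv"
  proof (intro allI impI)
    fix G c u y z pv phi lam mu
    assume F: "rlo_feasible a alpha Js b xh Omega G c u y z pv phi lam mu"
    note F' = F[unfolded rlo_feasible_def]
    have GO: "G \<in> Omega" using F' by blast
    have uc: "\<And>i j. j \<in> Js i \<Longrightarrow> alpha i j * xh $ j + u i j \<ge> 0 \<and> - alpha i j * xh $ j + u i j \<ge> 0"
      using F' by blast
    have yzu: "\<And>i j. j \<in> Js i \<Longrightarrow> y i j + z $ i \<ge> u i j" using F' by blast
    have prim: "\<And>i. (\<Sum>j\<in>UNIV. a i j * xh $ j) - (\<Sum>j\<in>Js i. y i j) - G $ i * z $ i \<ge> b $ i"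
      using F' by blast
    have ynn: "\<And>i j. j \<in> Js i \<Longrightarrow> y i j \<ge> 0" using F' by blast
    have znn: "\<And>i. z $ i \<ge> 0" using F' by blast
    have Gr: "\<And>i. 0 \<le> G $ i \<and> G $ i \<le> real (card (Js i))" using F' by blast
    have spv: "(\<Sum>i\<in>UNIV. pv $ i) = 1" using F' by blast
    have ceq: "\<And>j. (\<Sum>i\<in>UNIV. a i j * pv $ i) + (\<Sum>i\<in>{i. j \<in> Js i}. alpha i j * (lam i j - mu i j)) = c $ j"
      using F' by blast
    have phpv: "\<And>i j. j \<in> Js i \<Longrightarrow> phi i j \<le> pv $ i \<and> phi i j = lam i j + mu i j" using F' by blast
    have sphi: "\<And>i. (\<Sum>j\<in>Js i. phi i j) \<le> G $ i * pv $ i" using F' by blast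
    have pvnn: "\<And>i. pv $ i \<ge> 0" using F' by blast
    have nn: "\<And>i j. j \<in> Js i \<Longrightarrow> phi i j \<ge> 0 \<and> lam i j \<ge> 0 \<and> mu i j \<ge> 0" using F' by blast
    have Ple: "\<And>i. PP (V i) (ord i xh) (G $ i) \<le> s i"
    proof -
      fix i
      let ?W = "WW (ord i xh) (card (Js i)) (G $ i)"
      have Wr: "\<And>j. 0 \<le> ?W j \<and> ?W j \<le> 1" using WW_range[OF bij[of i xh]] Gr by blast
      have "PP (V i) (ord i xh) (G $ i) = (\<Sum>j\<in>Js i. V i j * ?W j)" using sumVW Gr by simp
      also have "\<dots> \<le> (\<Sum>j\<in>Js i. y i j + z $ i * ?W j)"
      proof (rule sum_mono)
        fix j assume j: "j \<in> Js i"
        have "V i j \<le> u i j" using uc[OF j] alpha_nonneg[OF j] unfolding V_def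
          by (cases "xh $ j \<ge> 0") auto
        hence "V i j \<le> y i j + z $ i" using yzu[OF j] by simp
        hence "V i j * ?W j \<le> (y i j + z $ i) * ?W j" using Wr by (simp add: mult_right_mono)
        also have "\<dots> = y i j * ?W j + z $ i * ?W j" by (simp add: algebra_simps)
        also have "y i j * ?W j \<le> y i j" using Wr ynn[OF j] by (simp add: mult_left_le)
        finally show "V i j * ?W j \<le> y i j + z $ i * ?W j" by simp
      qed
      also have "\<dots> = (\<Sum>j\<in>Js i. y i j) + z $ i * G $ i"
        using sum_WW[OF bij[of i xh], of "G $ i"] Gr by (simp add: sum.distrib sum_distrib_left[symmetric])
      also have "\<dots> \<le> s i" using prim[of i] unfolding s_def slack_def by (simp add: algebra_simps)
      finally show "PP (V i) (ord i xh) (G $ i) \<le> s i" .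
    qed
    have GT: "G \<in> TT" using to_Theta Gr Ple by blast
    have termb: "\<And>i. pv $ i * t istar \<le> pv $ i * s i - (\<Sum>j\<in>Js i. V i j * phi i j)"
    proof -
      fix i
      show "pv $ i * t istar \<le> pv $ i * s i - (\<Sum>j\<in>Js i. V i j * phi i j)"
      proof (cases "pv $ i = 0")
        case True
        hence "\<And>j. j \<in> Js i \<Longrightarrow> phi i j = 0" using phpv nn by force
        thus ?thesis using True by simp
      next
        case False
        hence pos: "pv $ i > 0" using pvnn[of i] by simp
        define phi' where "phi' i' j = phi i' j / pv $ i'" for i' j
        have sf: "sub_feasible a alpha Js b xh Omega i G phi'"
          unfolding sub_feasible_def
        proof (intro conjI ballI)
          have "(\<Sum>j\<in>Js i. phi' i j) = (\<Sum>j\<in>Js i. phi i j) / pv $ i"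
            unfolding phi'_def by (simp add: sum_divide_distrib)
          also have "\<dots> \<le> G $ i" using sphi[of i] pos by (simp add: divide_le_eq)
          finally show "(\<Sum>j\<in>Js i. phi' i j) \<le> G $ i" .
        next
          fix j assume j: "j \<in> Js i"
          show "0 \<le> phi' i j" unfolding phi'_def using nn[OF j] pos by simp
          show "phi' i j \<le> 1" unfolding phi'_def using phpv[OF j] pos by simp
        next
          show "G \<in> Theta a alpha Js b xh \<inter> Omega" using GT GO unfolding TT_def by simp
        qed
        have "t istar \<le> t i" by (rule istar_argmin)
        also have "t i \<le> sub_obj a alpha Js b xh i phi'" by (rule sub_opt_min[OF sf])
        also have "\<dots> = s i - (\<Sum>j\<in>Js i. V i j * phi i j) / pv $ i"
          unfolding sub_obj_def s_def slack_def V_def phi'_def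
          by (simp add: sum_divide_distrib)
        finally have "pv $ i * t istar \<le> pv $ i * (s i - (\<Sum>j\<in>Js i. V i j * phi i j) / pv $ i)"
          using pos by (simp add: mult_left_mono)
        thus ?thesis using pos by (simp add: algebra_simps)
      qed
    qed
    have cx: "\<And>j. c $ j * xh $ j \<ge> (\<Sum>i\<in>UNIV. a i j * pv $ i) * xh $ j
        - (\<Sum>i\<in>{i. j \<in> Js i}. V i j * phi i j)"
    proof -
      fix j
      have "(\<Sum>i\<in>{i. j \<in> Js i}. alpha i j * (lam i j - mu i j)) * xh $ j =
          (\<Sum>i\<in>{i. j \<in> Js i}. alpha i j * (lam i j - mu i j) * xh $ j)"
        by (simp add: sum_distrib_right)
      also have "\<dots> \<ge> (\<Sum>i\<in>{i. j \<in> Js i}. - (V i j * phi i j))"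
      proof (rule sum_mono)
        fix i assume "i \<in> {i. j \<in> Js i}"
        hence j: "j \<in> Js i" by simp
        have "\<bar>alpha i j * (lam i j - mu i j) * xh $ j\<bar> \<le> V i j * phi i j"
        proof -
          have "\<bar>lam i j - mu i j\<bar> \<le> phi i j" using nn[OF j] phpv[OF j] by linarith
          hence "\<bar>lam i j - mu i j\<bar> * (alpha i j * \<bar>xh $ j\<bar>) \<le> phi i j * (alpha i j * \<bar>xh $ j\<bar>)"
            using alpha_nonneg[OF j] by (simp add: mult_right_mono)
          moreover have "\<bar>alpha i j * (lam i j - mu i j) * xh $ j\<bar> = \<bar>lam i j - mu i j\<bar> * (alpha i j * \<bar>xh $ j\<bar>)"
            using alpha_nonneg[OF j] by (simp add: abs_mult)
          moreover have "phi i j * (alpha i j * \<bar>xh $ j\<bar>) = V i j * phi i j" unfolding V_def by simp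
          ultimately show ?thesis by linarith
        qed
        thus "- (V i j * phi i j) \<le> alpha i j * (lam i j - mu i j) * xh $ j" by linarith
      qed
      finally have "(\<Sum>i\<in>{i. j \<in> Js i}. alpha i j * (lam i j - mu i j)) * xh $ j \<ge>
          - (\<Sum>i\<in>{i. j \<in> Js i}. V i j * phi i j)" by (simp add: sum_negf)
      moreover have "c $ j * xh $ j = (\<Sum>i\<in>UNIV. a i j * pv $ i) * xh $ j +
          (\<Sum>i\<in>{i. j \<in> Js i}. alpha i j * (lam i j - mu i j)) * xh $ j"
      proof -
        have cj: "c $ j = (\<Sum>i\<in>UNIV. a i j * pv $ i) + (\<Sum>i\<in>{i. j \<in> Js i}. alpha i j * (lam i j - mu i j))"
          using ceq[of j] by simp
        show ?thesis unfolding cj by (rule distrib_right)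
      qed
      ultimately show "c $ j * xh $ j \<ge> (\<Sum>i\<in>UNIV. a i j * pv $ i) * xh $ j
        - (\<Sum>i\<in>{i. j \<in> Js i}. V i j * phi i j)" by linarith
    qed
    have swap: "(\<Sum>j\<in>UNIV. \<Sum>i\<in>{i. j \<in> Js i}. V i j * phi i j) =
        (\<Sum>i\<in>UNIV. \<Sum>j\<in>Js i. V i j * phi i j)"
      using sum.swap_restrict[of "UNIV :: 'n set" "UNIV :: 'm set" "\<lambda>j i. V i j * phi i j" "\<lambda>j i. j \<in> Js i"]
      by simp
    have swap2: "(\<Sum>j\<in>UNIV. (\<Sum>i\<in>UNIV. a i j * pv $ i) * xh $ j) =
        (\<Sum>i\<in>UNIV. pv $ i * (\<Sum>j\<in>UNIV. a i j * xh $ j))"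
    proof -
      have "(\<Sum>j\<in>UNIV. (\<Sum>i\<in>UNIV. a i j * pv $ i) * xh $ j) =
          (\<Sum>j\<in>UNIV. \<Sum>i\<in>UNIV. a i j * pv $ i * xh $ j)" by (simp add: sum_distrib_right)
      also have "\<dots> = (\<Sum>i\<in>UNIV. \<Sum>j\<in>UNIV. a i j * pv $ i * xh $ j)" by (rule sum.swap)
      also have "\<dots> = (\<Sum>i\<in>UNIV. pv $ i * (\<Sum>j\<in>UNIV. a i j * xh $ j))"
        by (subst sum_distrib_left) (rule sum.cong[OF refl], rule sum.cong[OF refl], simp add: mult_ac)
      finally show ?thesis .
    qed
    have "t istar = (\<Sum>i\<in>UNIV. pv $ i * t istar)" using spv by (simp add: sum_distrib_right[symmetric])
    also have "\<dots> \<le> (\<Sum>i\<in>UNIV. pv $ i * s i - (\<Sum>j\<in>Js i. V i j * phi i j))"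
      by (rule sum_mono) (rule termb)
    also have "\<dots> = (\<Sum>j\<in>UNIV. (\<Sum>i\<in>UNIV. a i j * pv $ i) * xh $ j)
        - (\<Sum>j\<in>UNIV. \<Sum>i\<in>{i. j \<in> Js i}. V i j * phi i j) - (\<Sum>i\<in>UNIV. b $ i * pv $ i)"
      unfolding swap swap2 s_def slack_def by (simp add: sum_subtractf sum.distrib algebra_simps)
    also have "\<dots> \<le> (\<Sum>j\<in>UNIV. c $ j * xh $ j) - (\<Sum>i\<in>UNIV. b $ i * pv $ i)"
    proof -
      have "(\<Sum>j\<in>UNIV. (\<Sum>i\<in>UNIV. a i j * pv $ i) * xh $ j)
        - (\<Sum>j\<in>UNIV. \<Sum>i\<in>{i. j \<in> Js i}. V i j * phi i j) =
        (\<Sum>j\<in>UNIV. (\<Sum>i\<in>UNIV. a i j * pv $ i) * xh $ j - (\<Sum>i\<in>{i. j \<in> Js i}. V i j * phi i j))"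
        by (simp add: sum_subtractf)
      also have "\<dots> \<le> (\<Sum>j\<in>UNIV. c $ j * xh $ j)" by (rule sum_mono) (rule cx)
      finally show ?thesis by simp
    qed
    also have "\<dots> = rlo_obj b xh c pv" unfolding rlo_obj_def by simp
    finally show "t istar \<le> rlo_obj b xh c pv" .
  qed
  have part2: "\<exists>u y z phi lam mu.
            rlo_feasible a alpha Js b xh Omega (Gs istar)
              (abar a alpha Js ord istar (Gs istar $ istar) xh) u y z (axis istar 1) phi lam mu
          \<and> rlo_obj b xh (abar a alpha Js ord istar (Gs istar $ istar) xh) (axis istar 1) = t istar"
  proof -
    define Gst where "Gst = Gs istar"
    define g where "g = Gst $ istar"
    define Wst where "Wst = WW (ord istar xh) (card (Js istar)) g"
    define th where "th i = TH (V i) (ord i xh) (card (Js i)) (Gst $ i)" for i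
    define u where "u i j = V i j" for i j
    define y where "y i j = max (V i j - th i) 0" for i j
    define z :: "real^'m" where "z = (\<chi> i. th i)"
    define phi where "phi i j = (if i = istar then Wst j else 0)" for i j
    define lam where "lam i j = (if i = istar \<and> xh $ j < 0 then Wst j else 0)" for i j
    define mu where "mu i j = (if i = istar \<and> xh $ j \<ge> 0 then Wst j else 0)" for i j
    define cc where "cc = abar a alpha Js ord istar g xh"
    have sfe: "sub_feasible a alpha Js b xh Omega istar Gst (phis istar)"
      using sub_opt_feas unfolding Gst_def by blast
    have GT: "Gst \<in> TT" and GO: "Gst \<in> Omega" using sfe unfolding sub_feasible_def TT_def by auto
    have Gr: "\<And>i. 0 \<le> Gst $ i \<and> Gst $ i \<le> real (card (Js i))" using Theta_range[OF GT] by blast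
    have gr: "0 \<le> g" "g \<le> real (card (Js istar))" using Gr[of istar] unfolding g_def by auto
    have Wr: "\<And>j. 0 \<le> Wst j \<and> Wst j \<le> 1" unfolding Wst_def using WW_range[OF bij[of istar xh]] gr by blast
    have Wout: "\<And>j. j \<notin> Js istar \<Longrightarrow> Wst j = 0" unfolding Wst_def using WW_out[OF bij[of istar xh]] gr by blast
    have sW: "(\<Sum>j\<in>Js istar. Wst j) = g" unfolding Wst_def using sum_WW[OF bij[of istar xh]] gr by blast
    have thnn: "\<And>i. 0 \<le> th i" unfolding th_def V_def
    proof -
      fix i show "0 \<le> TH (\<lambda>j. alpha i j * \<bar>xh $ j\<bar>) (ord i xh) (card (Js i)) (Gst $ i)"
        using Gr[of i] by (intro TH_nn[where v="\<lambda>j. alpha i j * \<bar>xh $ j\<bar>", OF bij[of i xh] _ _ vnn[of _ i xh] vord[of _ i _ xh]]) auto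
    qed
    have dual: "\<And>i. (\<Sum>j\<in>Js i. y i j) + th i * Gst $ i = PP (V i) (ord i xh) (Gst $ i)"
    proof -
      fix i show "(\<Sum>j\<in>Js i. y i j) + th i * Gst $ i = PP (V i) (ord i xh) (Gst $ i)"
        unfolding y_def th_def V_def using Gr[of i]
        by (intro PP_dual[where v="\<lambda>j. alpha i j * \<bar>xh $ j\<bar>", OF bij[of i xh] _ _ vnn[of _ i xh] vord[of _ i _ xh]]) auto
    qed
    have ax: "\<And>i. axis istar (1::real) $ i = (if i = istar then 1 else 0)" by (simp add: axis_def)
    have feas: "rlo_feasible a alpha Js b xh Omega Gst cc u y z (axis istar 1) phi lam mu"
      unfolding rlo_feasible_def
    proof (intro conjI allI ballI)
      show "Gst \<in> Omega" by (rule GO)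
    next
      fix i j assume j: "j \<in> Js i"
      show "0 \<le> alpha i j * xh $ j + u i j" "0 \<le> - alpha i j * xh $ j + u i j"
      proof -
        have a0: "0 \<le> alpha i j" by (rule alpha_nonneg[OF j])
        have "0 \<le> alpha i j * (xh $ j + \<bar>xh $ j\<bar>)" "0 \<le> alpha i j * (\<bar>xh $ j\<bar> - xh $ j)"
          using a0 by (simp_all add: mult_nonneg_nonneg)
        thus "0 \<le> alpha i j * xh $ j + u i j" "0 \<le> - alpha i j * xh $ j + u i j"
          unfolding u_def V_def by (simp_all add: algebra_simps)
      qed
      show "u i j \<le> y i j + z $ i" unfolding u_def y_def z_def by simp
      show "0 \<le> y i j" unfolding y_def by simp
      show "phi i j \<le> axis istar 1 $ i" unfolding phi_def ax using Wr by simp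
      show "phi i j = lam i j + mu i j" unfolding phi_def lam_def mu_def by simp
      show "0 \<le> phi i j" "0 \<le> lam i j" "0 \<le> mu i j" unfolding phi_def lam_def mu_def using Wr by auto
    next
      fix i
      show "b $ i \<le> (\<Sum>j\<in>UNIV. a i j * xh $ j) - (\<Sum>j\<in>Js i. y i j) - Gst $ i * z $ i"
        using dual[of i] Theta_P[OF GT, of i] unfolding z_def s_def slack_def
        by (simp add: algebra_simps)
      show "0 \<le> z $ i" unfolding z_def using thnn by simp
      show "0 \<le> Gst $ i" "Gst $ i \<le> real (card (Js i))" using Gr by auto
      show "0 \<le> axis istar (1::real) $ i" unfolding ax by simp
      show "(\<Sum>j\<in>Js i. phi i j) \<le> Gst $ i * axis istar 1 $ i"
        unfolding phi_def ax using sW g_def by simp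
    next
      show "(\<Sum>i\<in>UNIV. axis istar (1::real) $ i) = 1" unfolding ax by simp
    next
      fix j
      have s1: "(\<Sum>i\<in>UNIV. a i j * axis istar 1 $ i) = a istar j" unfolding ax
        by (simp add: if_distrib cong: if_cong)
      have "(\<Sum>i\<in>{i. j \<in> Js i}. alpha i j * (lam i j - mu i j)) =
          (\<Sum>i\<in>{i. j \<in> Js i}. if i = istar then - sgnp (xh $ j) * alpha i j * Wst j else 0)"
        by (rule sum.cong) (auto simp: lam_def mu_def sgnp_def)
      also have "\<dots> = - sgnp (xh $ j) * alpha istar j * Wst j"
        using Wout[of j] by (subst sum.delta) auto
      finally show "(\<Sum>i\<in>UNIV. a i j * axis istar 1 $ i) +
          (\<Sum>i\<in>{i. j \<in> Js i}. alpha i j * (lam i j - mu i j)) = cc $ j"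
        unfolding cc_def abar_WW s1 Wst_def by simp
    qed
    have PW: "(\<Sum>j\<in>Js istar. V istar j * Wst j) = PP (V istar) (ord istar xh) g"
      unfolding Wst_def using sumVW gr by blast
    have ge: "PP (V istar) (ord istar xh) g \<le> (\<Sum>j\<in>Js istar. V istar j * phis istar istar j)"
    proof -
      have sf: "sub_feasible a alpha Js b xh Omega istar Gst (\<lambda>_. Wst)"
        unfolding sub_feasible_def using sW Wr GT GO unfolding g_def TT_def by auto
      have "t istar \<le> sub_obj a alpha Js b xh istar (\<lambda>_. Wst)" by (rule sub_opt_min[OF sf])
      thus ?thesis using sub_opt_val[of istar] PW unfolding sub_obj_def V_def by simp
    qed
    have le: "(\<Sum>j\<in>Js istar. V istar j * phis istar istar j) \<le> PP (V istar) (ord istar xh) g"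
      using sfe unfolding sub_feasible_def g_def
      by (intro Pupper) (use gr g_def in auto)
    have tval: "t istar = s istar - PP (V istar) (ord istar xh) g"
      using sub_opt_val[of istar] ge le unfolding sub_obj_def s_def slack_def V_def by simp
    have "rlo_obj b xh cc (axis istar 1) =
        (\<Sum>j\<in>UNIV. a istar j * xh $ j - V istar j * Wst j) - b $ istar"
      unfolding rlo_obj_def cc_def abar_WW ax
      by (simp add: if_distrib V_def Wst_def sgnp_abs(1)[symmetric] algebra_simps cong: if_cong)
    also have "\<dots> = s istar - (\<Sum>j\<in>UNIV. V istar j * Wst j)"
      unfolding s_def slack_def by (simp add: sum_subtractf)
    also have "(\<Sum>j\<in>UNIV. V istar j * Wst j) = (\<Sum>j\<in>Js istar. V istar j * Wst j)"
      using Wout by (intro sum.mono_neutral_right) auto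
    finally have obj: "rlo_obj b xh cc (axis istar 1) = t istar" using PW tval by simp
    have "rlo_feasible a alpha Js b xh Omega (Gs istar)
              (abar a alpha Js ord istar (Gs istar $ istar) xh) u y z (axis istar 1) phi lam mu
          \<and> rlo_obj b xh (abar a alpha Js ord istar (Gs istar $ istar) xh) (axis istar 1) = t istar"
      using feas obj unfolding cc_def g_def Gst_def by (rule conjI)
    thus ?thesis by (intro exI)
  qed
  have part3: "(\<forall>i. (\<exists>j\<in>Js i. \<bar>a i j\<bar> > alpha i j) \<or> (\<exists>j. j \<notin> Js i \<and> a i j \<noteq> 0)) \<longrightarrow>
            abar a alpha Js ord istar (Gs istar $ istar) xh \<noteq> 0 \<and>
            (\<forall>i G x. 0 \<le> G \<and> G \<le> real (card (Js i)) \<longrightarrow> abar a alpha Js ord i G x \<noteq> 0)"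
  proof
    assume H: "\<forall>i. (\<exists>j\<in>Js i. \<bar>a i j\<bar> > alpha i j) \<or> (\<exists>j. j \<notin> Js i \<and> a i j \<noteq> 0)"
    have nz: "\<forall>i G x. 0 \<le> G \<and> G \<le> real (card (Js i)) \<longrightarrow> abar a alpha Js ord i G x \<noteq> 0"
    proof (intro allI impI)
      fix i G and x :: "real^'n"
      assume G: "0 \<le> G \<and> G \<le> real (card (Js i))"
      let ?W = "WW (ord i x) (card (Js i)) G"
      have Hi: "(\<exists>j\<in>Js i. \<bar>a i j\<bar> > alpha i j) \<or> (\<exists>j. j \<notin> Js i \<and> a i j \<noteq> 0)"
        using H by blast
      from Hi have "\<exists>j. abar a alpha Js ord i G x $ j \<noteq> 0"
      proof
        assume "\<exists>j\<in>Js i. \<bar>a i j\<bar> > alpha i j"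
        then obtain j where j: "j \<in> Js i" "\<bar>a i j\<bar> > alpha i j" by blast
        have "\<bar>sgnp (x $ j) * alpha i j * ?W j\<bar> \<le> alpha i j"
          using WW_range[OF bij[of i x], of G j] G alpha_nonneg[OF j(1)]
          by (simp add: abs_mult sgnp_abs mult_left_le)
        hence "a i j - sgnp (x $ j) * alpha i j * ?W j \<noteq> 0" using j(2) by linarith
        hence "abar a alpha Js ord i G x $ j \<noteq> 0" by (simp add: abar_WW)
        thus ?thesis by blast
      next
        assume "\<exists>j. j \<notin> Js i \<and> a i j \<noteq> 0"
        then obtain j where j: "j \<notin> Js i" "a i j \<noteq> 0" by blast
        have "?W j = 0" using WW_out[OF bij[of i x], of G j] G j by simp
        hence "abar a alpha Js ord i G x $ j \<noteq> 0" using j by (simp add: abar_WW)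
        thus ?thesis by blast
      qed
      thus "abar a alpha Js ord i G x \<noteq> 0" by auto
    qed
    have "Gs istar \<in> TT" using sub_opt_feas[of istar] unfolding sub_feasible_def TT_def by blast
    hence "0 \<le> Gs istar $ istar \<and> Gs istar $ istar \<le> real (card (Js istar))"
      using Theta_range by blast
    thus "abar a alpha Js ord istar (Gs istar $ istar) xh \<noteq> 0 \<and>
            (\<forall>i G x. 0 \<le> G \<and> G \<le> real (card (Js i)) \<longrightarrow> abar a alpha Js ord i G x \<noteq> 0)"
      using nz by blast
  qed
  show ?thesis using part1 part2 part3 by blast
qed

end
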